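(* Let $A$ be the weighted shift on $\mathcal{H}$ with weights $\{1/n\}_{n\ge1}$. If $r_1>r_2\ge0$, then $\|(z-r_1A)^{-1}\|\ge\|(z-r_2A)^{-1}\|$ for every complex $z\neq0$.
   Context: $\mathcal{H}$ is a separable infinite-dimensional complex Hilbert space with orthonormal basis $\{e_n\}_{n=0}^\infty$, and $A$ is defined by $Ae_n=\frac{1}{n+1}e_{n+1}$ for $n\ge0$. $A$ is quasinilpotent. *)

theory Defs
  imports "HOL-Analysis.Analysis"
begin

text \<open>Concrete model of the separable Hilbert space H = l2(N) over the complex numbers,
  with e_n the n-th standard unit sequence.\<close>

definition l2 :: "(nat \<Rightarrow> complex) set" where
  "l2 = {x. summable (\<lambda>n. (cmod (x n))\<^sup>2)}"

definition l2norm :: "(nat \<Rightarrow> complex) \<Rightarrow> real" where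
  "l2norm x = sqrt (\<Sum>n. (cmod (x n))\<^sup>2)"

text \<open>Weighted shift: A e_n = e_(n+1) / (n+1), i.e. (A x)_0 = 0, (A x)_m = x_(m-1) / m.\<close>

definition shiftA :: "(nat \<Rightarrow> complex) \<Rightarrow> nat \<Rightarrow> complex" where
  "shiftA x m = (if m = 0 then 0 else x (m - 1) / of_nat m)"

definition zmrA :: "complex \<Rightarrow> real \<Rightarrow> (nat \<Rightarrow> complex) \<Rightarrow> nat \<Rightarrow> complex" where
  "zmrA z r x n = z * x n - complex_of_real r * shiftA x n"

text \<open>The inverse (z - r A)^(-1) on l2: the unique preimage in l2 (set to 0 outside l2).\<close>

definition resolvent :: "complex \<Rightarrow> real \<Rightarrow> (nat \<Rightarrow> complex) \<Rightarrow> nat \<Rightarrow> complex" where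
  "resolvent z r x = (if x \<in> l2 then (THE y. y \<in> l2 \<and> zmrA z r y = x) else (\<lambda>_. 0))"

definition opnorm :: "((nat \<Rightarrow> complex) \<Rightarrow> nat \<Rightarrow> complex) \<Rightarrow> real" where
  "opnorm T = Sup {l2norm (T x) | x. x \<in> l2 \<and> l2norm x \<le> 1}"

end

theory Submission
  imports Defs
begin

lemma conv_l2:
  fixes c d Y :: "nat \<Rightarrow> real"
  assumes c0: "\<And>k. c k \<ge> 0" and d0: "\<And>j. d j \<ge> 0" and cC: "\<And>N. (\<Sum>k<N. c k) \<le> C"
    and sd: "summable (\<lambda>j. (d j)^2)"
    and Y0: "\<And>n. 0 \<le> Y n" and Yle: "\<And>n. Y n \<le> (\<Sum>i\<le>n. c i * d (n - i))"
  shows "summable (\<lambda>n. (Y n)^2) \<and> (\<Sum>n. (Y n)^2) \<le> C^2 * (\<Sum>j. (d j)^2)"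
proof -
  define D where "D = (\<Sum>j. (d j)^2)"
  have C0: "C \<ge> 0" using cC[of 0] by simp
  have dD: "(\<Sum>j<N. (d j)^2) \<le> D" for N
    unfolding D_def by (rule sum_le_suminf[OF sd]) auto
  have D0: "D \<ge> 0" using dD[of 0] by simp
  have CS: "(Y n)^2 \<le> C * (\<Sum>i\<le>n. c i * (d (n - i))^2)" for n
  proof -
    have "(Y n)^2 \<le> (\<Sum>i\<le>n. c i * d (n - i))^2"
      using Y0[of n] Yle[of n] by (simp add: power_mono)
    also have "(\<Sum>i\<le>n. c i * d (n - i)) = (\<Sum>i\<le>n. sqrt (c i) * (sqrt (c i) * d (n - i)))"
      by (rule sum.cong) (auto simp: c0 mult.assoc[symmetric])
    also have "(\<dots>)^2 \<le> (\<Sum>i\<le>n. (sqrt (c i))^2) * (\<Sum>i\<le>n. (sqrt (c i) * d (n - i))^2)"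
      by (rule Cauchy_Schwarz_ineq_sum)
    also have "\<dots> = (\<Sum>i\<le>n. c i) * (\<Sum>i\<le>n. c i * (d (n - i))^2)"
      by (simp add: c0 power_mult_distrib)
    also have "\<dots> \<le> C * (\<Sum>i\<le>n. c i * (d (n - i))^2)"
      apply (rule mult_right_mono)
      using cC[of "Suc n"] apply (simp add: lessThan_Suc_atMost)
      by (auto intro!: sum_nonneg simp: c0)
    finally show ?thesis .
  qed
  have part: "(\<Sum>n<N. (Y n)^2) \<le> C^2 * D" for N
  proof -
    have "(\<Sum>n<N. (Y n)^2) \<le> (\<Sum>n<N. C * (\<Sum>i\<le>n. c i * (d (n - i))^2))"
      by (rule sum_mono) (rule CS)
    also have "\<dots> = C * (\<Sum>(i,j)\<in>{(i,j). i+j < N}. c i * (d j)^2)"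
      by (simp add: sum_distrib_left sum.triangle_reindex)
    also have "(\<Sum>(i,j)\<in>{(i,j). i+j < N}. c i * (d j)^2) \<le> (\<Sum>(i,j)\<in>{..<N}\<times>{..<N}. c i * (d j)^2)"
      by (rule sum_mono2) (auto simp: c0)
    also have "\<dots> = (\<Sum>i<N. c i) * (\<Sum>j<N. (d j)^2)"
      by (simp add: sum_product sum.cartesian_product)
    also have "\<dots> \<le> C * D"
      by (rule mult_mono) (auto simp: cC dD C0 intro!: sum_nonneg)
    finally show ?thesis using C0 by (simp add: power2_eq_square mult_left_mono)
  qed
  have sY: "summable (\<lambda>n. (Y n)^2)"
    by (rule summableI_nonneg_bounded[where x="C^2 * D"]) (auto simp: part)
  show ?thesis using sY suminf_le_const[OF sY part] unfolding D_def by simp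
qed

definition solv :: "complex \<Rightarrow> real \<Rightarrow> (nat \<Rightarrow> complex) \<Rightarrow> nat \<Rightarrow> complex" where
  "solv z r x n = (\<Sum>j\<le>n. complex_of_real (r^(n-j) * fact j / fact n) / z^(n-j+1) * x j)"

definition Kc :: "real \<Rightarrow> real \<Rightarrow> nat \<Rightarrow> nat \<Rightarrow> real" where
  "Kc a r n j = r^(n-j) * fact j / fact n / a^(n-j+1)"

lemma zmrA_solv:
  assumes z: "z \<noteq> 0"
  shows "zmrA z r (solv z r x) = x"
proof
  fix n show "zmrA z r (solv z r x) n = x n"
  proof (cases n)
    case 0 then show ?thesis using z by (simp add: zmrA_def shiftA_def solv_def)
  next
    case (Suc m)
    have nz: "1 + complex_of_nat m \<noteq> 0" by (metis of_nat_Suc of_nat_eq_0_iff Suc_neq_Zero)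
    have "z * solv z r x (Suc m) = x (Suc m) +
       (\<Sum>j\<le>m. z * (complex_of_real (r^(Suc m-j) * fact j / fact (Suc m)) / z^(Suc m-j+1) * x j))"
      unfolding solv_def sum_distrib_left using z nz by (simp add: add.commute)
    also have "(\<Sum>j\<le>m. z * (complex_of_real (r^(Suc m-j) * fact j / fact (Suc m)) / z^(Suc m-j+1) * x j))
       = complex_of_real r * solv z r x m / of_nat (Suc m)"
      unfolding solv_def sum_distrib_left sum_divide_distrib
    proof (rule sum.cong)
      fix j assume "j \<in> {..m}"
      then have j: "j \<le> m" by simp
      then have e: "Suc m - j = Suc (m - j)" by simp
      show "z * (complex_of_real (r^(Suc m-j) * fact j / fact (Suc m)) / z^(Suc m-j+1) * x j) =
        complex_of_real r * (complex_of_real (r^(m-j) * fact j / fact m) / z^(m-j+1) * x j) / of_nat (Suc m)"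
        unfolding e using z by (simp add: field_simps del: of_nat_Suc)
    qed simp
    finally have "z * solv z r x (Suc m) = x (Suc m) + complex_of_real r * solv z r x m / of_nat (Suc m)" .
    then show ?thesis using Suc by (simp add: zmrA_def shiftA_def del: of_nat_Suc)
  qed
qed

lemma zmrA_inj:
  assumes z: "z \<noteq> 0" and e: "zmrA z r y = zmrA z r y'"
  shows "y = y'"
proof
  fix n show "y n = y' n"
  proof (induction n)
    case 0 then show ?case using fun_cong[OF e, of 0] z by (simp add: zmrA_def shiftA_def)
  next
    case (Suc m) then show ?case using fun_cong[OF e, of "Suc m"] z by (simp add: zmrA_def shiftA_def)
  qed
qed

lemma solv_bound:
  assumes z: "z \<noteq> 0" and r: "r \<ge> 0"
  shows "cmod (solv z r x n) \<le> (\<Sum>j\<le>n. Kc (cmod z) r n j * cmod (x j))"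
  unfolding solv_def
  apply (rule order.trans[OF norm_sum])
  apply (rule sum_mono)
  using r z by (simp add: Kc_def norm_mult norm_divide norm_power)

lemma Kc_le:
  assumes a: "a > 0" and r: "r \<ge> 0" and j: "j \<le> n"
  shows "Kc a r n j \<le> (r/a)^(n-j) / fact (n-j) / a"
proof -
  have c: "n choose j \<ge> 1" using j by (simp add: Suc_le_eq)
  have "fact j * fact (n-j) * 1 \<le> fact j * fact (n-j) * (n choose j)"
    by (rule mult_left_mono[OF c]) simp
  then have "fact j * fact (n-j) \<le> (fact n :: nat)" using binomial_fact_lemma[OF j] by simp
  then have f: "fact j * fact (n-j) \<le> (fact n :: real)"
    by (metis of_nat_fact of_nat_le_iff of_nat_mult)
  have f2: "fact j / fact n \<le> 1 / (fact (n-j) :: real)"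
    using f by (simp add: divide_simps)
  have "Kc a r n j = r^(n-j) / a^(n-j+1) * (fact j / fact n)"
    by (simp add: Kc_def)
  also have "\<dots> \<le> r^(n-j) / a^(n-j+1) * (1 / fact (n-j))"
    by (rule mult_left_mono[OF f2]) (use a r in simp)
  also have "\<dots> = (r/a)^(n-j) / fact (n-j) / a"
    by (simp add: power_divide)
  finally show ?thesis .
qed


lemma l2_dom:
  assumes le: "\<And>n. cmod (f n) \<le> Y n" and sY: "summable (\<lambda>n. (Y n)^2)"
  shows "f \<in> l2 \<and> l2norm f \<le> sqrt (\<Sum>n. (Y n)^2)"
proof -
  have le2: "(cmod (f n))^2 \<le> (Y n)^2" for n
    using le[of n] by (simp add: power_mono)
  have s: "summable (\<lambda>n. (cmod (f n))^2)"
    by (rule summable_comparison_test'[OF sY, of 0]) (simp add: le2)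
  have "(\<Sum>n. (cmod (f n))^2) \<le> (\<Sum>n. (Y n)^2)"
    by (rule suminf_le[OF le2 s sY])
  then show ?thesis using s unfolding l2_def l2norm_def by simp
qed

lemma exp_part:
  fixes t :: real
  assumes "t \<ge> 0"
  shows "(\<Sum>k<N. t^k / fact k) \<le> exp t"
proof -
  have "(\<lambda>k. t^k / fact k) sums exp t" 
  proof -
    have "(\<lambda>k. t^k / fact k) = (\<lambda>n. t^n /\<^sub>R fact n)" by (rule ext) (simp add: divide_inverse mult.commute)
    then show ?thesis using exp_converges[of t] by simp
  qed
  then show ?thesis
    by (metis (no_types, lifting) assms divide_nonneg_nonneg fact_ge_zero sum_le_suminf sums_summable sums_unique finite_lessThan zero_le_power)
qed

lemma solv_l2:
  assumes z: "z \<noteq> 0" and r: "r \<ge> 0" and x: "x \<in> l2"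
  shows "solv z r x \<in> l2 \<and> l2norm (solv z r x) \<le> exp (r / cmod z) / cmod z * l2norm x"
proof -
  define a where "a = cmod z"
  have a: "a > 0" using z by (simp add: a_def)
  define c where "c k = (r/a)^k / fact k / a" for k
  define Y where "Y n = (\<Sum>j\<le>n. Kc a r n j * cmod (x j))" for n
  define C where "C = exp (r/a) / a"
  have c0: "c k \<ge> 0" for k using a r by (simp add: c_def)
  have cC: "(\<Sum>k<N. c k) \<le> C" for N
  proof -
    have "(\<Sum>k<N. c k) = (\<Sum>k<N. (r/a)^k / fact k) / a"
      by (simp add: c_def sum_divide_distrib)
    also have "\<dots> \<le> C" unfolding C_def
      by (rule divide_right_mono[OF exp_part]) (use a r in auto)
    finally show ?thesis .
  qed
  have sd: "summable (\<lambda>j. (cmod (x j))^2)" using x by (simp add: l2_def)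
  have Y0: "0 \<le> Y n" for n
    unfolding Y_def Kc_def using a r by (auto intro!: sum_nonneg)
  have Yle: "Y n \<le> (\<Sum>i\<le>n. c i * cmod (x (n - i)))" for n
  proof -
    have "Y n \<le> (\<Sum>j\<le>n. c (n - j) * cmod (x j))"
      unfolding Y_def c_def
      apply (rule sum_mono, rule mult_right_mono) using Kc_le[OF a r] by auto
    also have "\<dots> = (\<Sum>i\<le>n. c i * cmod (x (n - i)))"
      using sum.atLeastAtMost_rev[of "\<lambda>j. c (n - j) * cmod (x j)" 0 n]
      by (simp add: atMost_atLeast0)
    finally show ?thesis .
  qed
  from conv_l2[OF c0 _ cC sd Y0 Yle]
  have sY: "summable (\<lambda>n. (Y n)^2)" and bY: "(\<Sum>n. (Y n)^2) \<le> C^2 * (\<Sum>j. (cmod (x j))^2)"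
    by auto
  have le: "cmod (solv z r x n) \<le> Y n" for n
    using solv_bound[OF z r, of x n] by (simp add: Y_def a_def)
  from l2_dom[OF le sY] have 1: "solv z r x \<in> l2" and 2: "l2norm (solv z r x) \<le> sqrt (\<Sum>n. (Y n)^2)"
    by auto
  have C0: "C \<ge> 0" using a by (simp add: C_def)
  have "sqrt (\<Sum>n. (Y n)^2) \<le> sqrt (C^2 * (\<Sum>j. (cmod (x j))^2))"
    using bY by simp
  also have "\<dots> = C * l2norm x"
    using C0 by (simp add: l2norm_def real_sqrt_mult)
  finally show ?thesis using 1 2 by (simp add: C_def a_def)
qed

lemma resolvent_eq:
  assumes z: "z \<noteq> 0" and r: "r \<ge> 0" and x: "x \<in> l2"
  shows "resolvent z r x = solv z r x"
  unfolding resolvent_def using x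
  apply simp
  apply (rule the_equality)
  using solv_l2[OF z r x] zmrA_solv[OF z] apply simp
  using zmrA_solv[OF z] zmrA_inj[OF z] by metis


lemma solv_rot:
  assumes z: "z \<noteq> 0"
  defines "u \<equiv> z / complex_of_real (cmod z)"
  shows "solv z r (\<lambda>j. complex_of_real (cmod (x j)) / u^j) n
     = complex_of_real (\<Sum>j\<le>n. Kc (cmod z) r n j * cmod (x j)) / u^(n+1)"
proof -
  define a where "a = cmod z"
  have a: "a > 0" using z by (simp add: a_def)
  have u0: "u \<noteq> 0" using z by (simp add: u_def)
  have zu: "z = complex_of_real a * u" using a by (simp add: u_def a_def)
  show ?thesis
    unfolding solv_def of_real_sum sum_divide_distrib a_def[symmetric]
  proof (rule sum.cong)
    fix j assume "j \<in> {..n}"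
    then have j: "j \<le> n" by simp
    have pu: "u^(n+1) = u^(n-j+1) * u^j"
      using j by (simp add: power_add[symmetric])
    show "complex_of_real (r ^ (n - j) * fact j / fact n) / z ^ (n - j + 1) *
          (complex_of_real (cmod (x j)) / u ^ j) =
          complex_of_real (Kc a r n j * cmod (x j)) / u ^ (n + 1)"
      unfolding pu zu power_mult_distrib Kc_def using a u0
      by (simp add: field_simps)
  qed simp
qed

theorem lemma3p4:
  fixes r1 r2 :: real and z :: complex
  assumes "r1 > r2" and "r2 \<ge> 0" and "z \<noteq> 0"
  shows "opnorm (resolvent z r1) \<ge> opnorm (resolvent z r2)"
proof -
  note z = \<open>z \<noteq> 0\<close>
  have r2: "r2 \<ge> 0" and r1: "r1 \<ge> 0" using assms by auto
  define a where "a = cmod z"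
  have a: "a > 0" using z by (simp add: a_def)
  define u where "u = z / complex_of_real (cmod z)"
  have u1: "cmod u = 1" using z by (simp add: u_def norm_divide)
  define S where "S r = {l2norm (resolvent z r x) | x. x \<in> l2 \<and> l2norm x \<le> 1}" for r
  have bdd: "bdd_above (S r1)"
  proof (rule bdd_aboveI)
    fix b assume "b \<in> S r1"
    then obtain x where x: "x \<in> l2" "l2norm x \<le> 1" and b: "b = l2norm (resolvent z r1 x)"
      by (auto simp: S_def)
    have "b \<le> exp (r1 / cmod z) / cmod z * l2norm x"
      using solv_l2[OF z r1 x(1)] resolvent_eq[OF z r1 x(1)] b by simp
    also have "\<dots> \<le> exp (r1 / cmod z) / cmod z * 1"
      by (rule mult_left_mono[OF x(2)]) simp
    finally show "b \<le> exp (r1 / cmod z) / cmod z" by simp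
  qed
  have ne: "S r2 \<noteq> {}"
  proof -
    have "(\<lambda>_. 0) \<in> l2" by (simp add: l2_def)
    moreover have "l2norm (\<lambda>_. 0) \<le> 1" by (simp add: l2norm_def)
    ultimately show ?thesis by (auto simp: S_def)
  qed
  have dom: "\<exists>c\<in>S r1. b \<le> c" if "b \<in> S r2" for b
  proof -
    from that obtain x where x: "x \<in> l2" "l2norm x \<le> 1" and b: "b = l2norm (resolvent z r2 x)"
      by (auto simp: S_def)
    define x' where "x' j = complex_of_real (cmod (x j)) / u^j" for j
    have cx': "cmod (x' j) = cmod (x j)" for j
      using u1 by (simp add: x'_def norm_divide norm_power)
    have x'l2: "x' \<in> l2" using x(1) by (simp add: l2_def cx')
    have nx': "l2norm x' = l2norm x" by (simp add: l2norm_def cx')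
    define Y where "Y r n = (\<Sum>j\<le>n. Kc a r n j * cmod (x j))" for r n
    have sr1: "solv z r1 x' n = complex_of_real (Y r1 n) / u^(n+1)" for n
    proof -
      have x'eq: "x' = (\<lambda>j. complex_of_real (cmod (x j)) / u^j)" using x'_def by auto
      show ?thesis unfolding x'eq Y_def a_def u_def by (rule solv_rot[OF z])
    qed
    have cY: "cmod (solv z r1 x' n) = Y r1 n" for n
    proof -
      have "Y r1 n \<ge> 0" unfolding Y_def Kc_def using a r1 by (auto intro!: sum_nonneg)
      then show ?thesis using u1 by (simp add: sr1 norm_divide norm_power norm_mult del: power_Suc)
    qed
    have le: "cmod (solv z r2 x n) \<le> cmod (solv z r1 x' n)" for n
    proof -
      have "cmod (solv z r2 x n) \<le> Y r2 n"
        using solv_bound[OF z r2, of x n] by (simp add: Y_def a_def)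
      also have "\<dots> \<le> Y r1 n"
        unfolding Y_def Kc_def
        apply (rule sum_mono)
        apply (rule mult_right_mono)
         apply (intro divide_right_mono mult_right_mono power_mono)
        using assms a by auto
      finally show ?thesis using cY by simp
    qed
    have s1: "solv z r1 x' \<in> l2" using solv_l2[OF z r1 x'l2] by simp
    then have sm: "summable (\<lambda>n. (cmod (solv z r1 x' n))^2)" by (simp add: l2_def)
    have "l2norm (solv z r2 x) \<le> sqrt (\<Sum>n. (cmod (solv z r1 x' n))^2)"
      using l2_dom[OF le sm] by simp
    then have "b \<le> l2norm (resolvent z r1 x')"
      using b resolvent_eq[OF z r2 x(1)] resolvent_eq[OF z r1 x'l2] by (simp add: l2norm_def)
    moreover have "l2norm (resolvent z r1 x') \<in> S r1"
      using x'l2 x(2) nx' by (auto simp: S_def)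
    ultimately show ?thesis by blast
  qed
  have "Sup (S r2) \<le> Sup (S r1)" by (rule cSup_mono[OF ne bdd dom])
  then show ?thesis by (simp add: opnorm_def S_def)
qed

end
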